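(* Let $(S_n)_{n\geq 0}$ be the simple random walk on $\mathbf{Z}$, i.e. $S_n=X_1+\cdots+X_n$ where $(X_k)_{k\geq 1}$ is a sequence of independent random variables with $\mathbf{P}(X_k=1)=\mathbf{P}(X_k=-1)=\tfrac12$. Let $\varepsilon$ be a real number with $0<\varepsilon\leq 1/4$. Then for any odd integer $q\geq 1$ and any integer $a$ coprime with $q$, we have $$\mathbf{P}(S_n \text{ is prime and } S_n\equiv a \pmod q)\ll \frac{1}{\varphi(q)}\,\frac{1}{\log n}$$ for all integers $n\geq 2$ with $q\leq n^{1/4-\varepsilon}$, where the implied constant depends only on $\varepsilon$.
   Context: $\varphi$ denotes Euler's function. The notation $A\ll B$ means $|A|\leq CB$ for some constant $C$ (the implied constant). *)

theory Defs
  imports "HOL-Probability.Probability" "HOL-Number_Theory.Number_Theory"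
begin

definition srw_step :: "int pmf" where
  "srw_step = pmf_of_set {-1, 1}"

definition srw :: "nat \<Rightarrow> int pmf" where
  "srw n = map_pmf (\<lambda>X. \<Sum>k\<in>{1..n}. X k) (Pi_pmf {1..n} 0 (\<lambda>_. srw_step))"

end

theory Submission
  imports Defs "HOL-Analysis.Harmonic_Numbers" "HOL-Computational_Algebra.Squarefree"
begin

lemma srw_step_alt: "srw_step = map_pmf (\<lambda>b. if b then 1 else -1) (bernoulli_pmf (1/2))"
proof -
  have "map_pmf (\<lambda>b. if b then (1::int) else -1) (pmf_of_set UNIV) = pmf_of_set ((\<lambda>b. if b then (1::int) else -1) ` UNIV)"
    by (rule map_pmf_of_set_inj) (auto simp: inj_on_def)
  moreover have "((\<lambda>b. if b then (1::int) else -1) ` UNIV) = {-1,1}" by (auto simp: image_def)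
  ultimately show ?thesis unfolding srw_step_def bernoulli_pmf_half_conv_pmf_of_set by simp
qed

lemma srw_Suc: "srw (Suc n) = map_pmf (\<lambda>(y,s). y + s) (pair_pmf srw_step (srw n))"
proof -
  have "Pi_pmf {1..Suc n} 0 (\<lambda>_. srw_step) = map_pmf (\<lambda>(y,f). f(Suc n:=y)) (pair_pmf srw_step (Pi_pmf {1..n} 0 (\<lambda>_. srw_step)))"
    using Pi_pmf_insert[of "{1..n}" "Suc n" 0 "\<lambda>_. srw_step"]
    by (simp add: atLeastAtMostSuc_conv)
  then have "srw (Suc n) = map_pmf (\<lambda>X. \<Sum>k\<in>{1..Suc n}. X k) (map_pmf (\<lambda>(y,f). f(Suc n:=y)) (pair_pmf srw_step (Pi_pmf {1..n} 0 (\<lambda>_. srw_step))))"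
    unfolding srw_def by simp
  also have "\<dots> = map_pmf (\<lambda>(y,f). y + (\<Sum>k\<in>{1..n}. f k)) (pair_pmf srw_step (Pi_pmf {1..n} 0 (\<lambda>_. srw_step)))"
    unfolding pmf.map_comp
    by (intro map_pmf_cong refl) (auto simp: atLeastAtMostSuc_conv)
  also have "\<dots> = map_pmf (\<lambda>(y,s). y + s) (pair_pmf srw_step (srw n))"
    unfolding srw_def pair_map_pmf2 pmf.map_comp
    by (intro map_pmf_cong refl) auto
  finally show ?thesis .
qed

lemma srw_binomial: "srw n = map_pmf (\<lambda>k. 2 * int k - int n) (binomial_pmf n (1/2))"
proof (induction n)
  case 0
  then show ?case unfolding srw_def by (simp add: binomial_pmf_0)
next
  case (Suc n)
  have b: "binomial_pmf (Suc n) (1/2) = do {b \<leftarrow> bernoulli_pmf (1/2);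
                 k \<leftarrow> binomial_pmf n (1/2);
                 return_pmf ((if b then 1 else 0) + k)}"
    by (rule binomial_pmf_Suc) auto
  show ?case
    unfolding srw_Suc Suc srw_step_alt b
    apply (simp add: pair_pmf_def map_pmf_def bind_assoc_pmf bind_return_pmf algebra_simps)
    apply (intro bind_pmf_cong refl)
    apply auto
    done
qed

lemma central_binom_sq: "real ((2*m) choose m)^2 * (2*m+1) \<le> 16^m"
proof (induction m)
  case 0
  then show ?case by simp
next
  case (Suc m)
  define c where "c = real ((2*m) choose m)"
  define c' where "c' = real ((2*Suc m) choose Suc m)"
  have e1: "(Suc m) * ((2*m+1) choose m) = (2*m+1) * ((2*m) choose m)"
    using binomial_absorb_comp[of "2*m+1" m] by simp
  have e2: "((2*Suc m) choose Suc m) * Suc m = (2*m+2) * ((2*m+1) choose m)"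
  proof -
    have h: "2 * Suc m = Suc (2*m+1)" by simp
    show ?thesis unfolding h Suc_times_binomial_eq[of "2*m+1" m, symmetric] by simp
  qed
  have e: "(real m + 1) * c' = 2 * (2*real m+1) * c"
  proof -
    define B where "B = real ((2*m+1) choose m)"
    have "real (Suc m * ((2*m+1) choose m)) = real ((2*m+1) * ((2*m) choose m))" using e1 by (rule arg_cong)
    then have r1: "(real m + 1) * B = (2*real m+1) * c" unfolding B_def c_def of_nat_mult
      by (simp only: of_nat_Suc of_nat_add of_nat_mult of_nat_1 of_nat_numeral add.commute)
    have "real (((2*Suc m) choose Suc m) * Suc m) = real ((2*m+2) * ((2*m+1) choose m))" using e2 by (rule arg_cong)
    then have r2: "c' * (real m + 1) = (2*real m+2) * B" unfolding B_def c'_def of_nat_mult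
      by (simp only: of_nat_Suc of_nat_add of_nat_mult of_nat_1 of_nat_numeral add.commute)
    have "(real m + 1) * ((real m + 1) * c') = (real m + 1) * (c' * (real m + 1))" by simp
    also have "\<dots> = (real m + 1) * ((2*real m+2) * B)" using r2 by simp
    also have "\<dots> = 2 * (real m + 1) * ((real m + 1) * B)" by (simp add: algebra_simps)
    also have "\<dots> = 2 * (real m + 1) * ((2*real m+1) * c)" using r1 by simp
    also have "\<dots> = (real m + 1) * (2 * (2*real m+1) * c)" by (simp add: algebra_simps)
    finally have "(real m + 1) * ((real m + 1) * c') = (real m + 1) * (2 * (2*real m+1) * c)" .
    then show ?thesis by simp
  qed
  have IH: "c^2 * (2*real m+1) \<le> 16^m" using Suc.IH unfolding c_def by (simp add: algebra_simps)
  have "(real m+1)^2 * (c'^2 * (2*real m+3)) = 4 * (2*real m+1)^2 * c^2 * (2*real m+3)"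
  proof -
    have "(real m+1)^2 * (c'^2 * (2*real m+3)) = ((real m + 1) * c')^2 * (2*real m+3)"
      by (simp add: power_mult_distrib)
    also have "\<dots> = (2 * (2*real m+1) * c)^2 * (2*real m+3)" using e by simp
    also have "\<dots> = 4 * (2*real m+1)^2 * c^2 * (2*real m+3)" by (simp add: power2_eq_square algebra_simps)
    finally show ?thesis .
  qed
  also have "\<dots> \<le> 4 * (2*real m+1) * c^2 * (4 * (real m+1)^2)"
  proof -
    have "(2*real m+1) * (2*real m+3) \<le> 4 * (real m+1)^2" by (simp add: power2_eq_square algebra_simps)
    then have "(2*real m+1) * ((2*real m+1) * (2*real m+3)) \<le> (2*real m+1) * (4 * (real m+1)^2)"
      by (intro mult_left_mono) auto
    then have "4 * c^2 * ((2*real m+1) * ((2*real m+1) * (2*real m+3))) \<le> 4 * c^2 * ((2*real m+1) * (4 * (real m+1)^2))"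
      by (intro mult_left_mono) auto
    then show ?thesis by (simp add: power2_eq_square algebra_simps)
  qed
  also have "\<dots> = (real m+1)^2 * (16 * (c^2 * (2*real m+1)))" by (simp add: algebra_simps)
  finally have "c'^2 * (2*real m+3) \<le> 16 * (c^2 * (2*real m+1))"
    by (rule mult_left_le_imp_le) auto
  also have "\<dots> \<le> 16 * 16^m" using IH by simp
  finally show ?case unfolding c'_def by (simp add: algebra_simps)
qed

lemma central_binom_bound:
  assumes "n \<ge> 1"
  shows "real (n choose (n div 2)) / 2^n \<le> 1 / sqrt n"
proof -
  have sq: "(real (n choose (n div 2)) / 2^n)^2 \<le> 1 / n"
  proof (cases "even n")
    case True
    then obtain m where m: "n = 2*m" by auto
    have "real ((2*m) choose m)^2 * (2*m+1) \<le> 16^m" by (rule central_binom_sq)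
    moreover have "(2::real)^n = 4^m" unfolding m by (simp add: power_mult)
    moreover have "(4::real)^m * 4^m = 16^m" by (simp add: power_mult_distrib[symmetric])
    ultimately have "(real ((2*m) choose m) / 2^n)^2 \<le> 1 / (2*m+1)"
      by (simp add: power_divide field_simps power2_eq_square)
    also have "\<dots> \<le> 1 / n" using m assms by (intro divide_left_mono) auto
    finally show ?thesis using m by simp
  next
    case False
    then obtain m where m: "n = 2*m+1" using oddE by blast
    have dm: "n div 2 = m" using m by simp
    have e1: "(Suc m) * ((2*m+1) choose m) = (2*m+1) * ((2*m) choose m)"
      using binomial_absorb_comp[of "2*m+1" m] by simp
    have le: "real ((2*m+1) choose m) \<le> 2 * real ((2*m) choose m)"
    proof -
      have "real (Suc m) * real ((2*m+1) choose m) = real (2*m+1) * real ((2*m) choose m)"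
        using e1 by (metis of_nat_mult)
      also have "\<dots> \<le> real (Suc m) * (2 * real ((2*m) choose m))" by simp
      finally show ?thesis by (rule mult_left_le_imp_le) auto
    qed
    have "real ((2*m) choose m)^2 * (2*m+1) \<le> 16^m" by (rule central_binom_sq)
    moreover have "(2::real)^n = 2 * 4^m" unfolding m by (simp add: power_mult)
    moreover have "(4::real)^m * 4^m = 16^m" by (simp add: power_mult_distrib[symmetric])
    ultimately have A: "(2 * real ((2*m) choose m) / 2^n)^2 \<le> 1 / (2*m+1)"
      by (simp add: power_divide field_simps power2_eq_square)
    have B: "(real ((2*m+1) choose m) / 2^n)^2 \<le> (2 * real ((2*m) choose m) / 2^n)^2"
      using le by (intro power_mono divide_right_mono) auto
    from B A have "(real ((2*m+1) choose m) / 2^n)^2 \<le> 1 / (2*m+1)" by (rule order_trans)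
    then show ?thesis using m dm by (simp add: algebra_simps)
  qed
  have "real (n choose (n div 2)) / 2^n = sqrt ((real (n choose (n div 2)) / 2^n)^2)" by simp
  also have "\<dots> \<le> sqrt (1/n)" using sq by (rule real_sqrt_le_mono)
  also have "\<dots> = 1 / sqrt n" by (simp add: real_sqrt_divide)
  finally show ?thesis .
qed

lemma srw_pmf_form: "pmf (srw n) (2 * int k - int n) = real (n choose k) / 2^n"
proof -
  have "inj (\<lambda>k::nat. 2 * int k - int n)" by (auto simp: inj_on_def)
  then have "pmf (srw n) (2 * int k - int n) = pmf (binomial_pmf n (1/2)) k"
    unfolding srw_binomial by (rule pmf_map_inj')
  also have "\<dots> = real (n choose k) * (1/2)^k * (1/2)^(n-k)"
    by (subst pmf_binomial) auto
  also have "\<dots> = real (n choose k) / 2^n"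
  proof (cases "k \<le> n")
    case True
    then have "(1/2::real)^k * (1/2)^(n-k) = (1/2)^n" by (simp add: power_add[symmetric])
    then show ?thesis by (simp add: power_one_over field_simps)
  next
    case False
    then show ?thesis by (simp add: binomial_eq_0)
  qed
  finally show ?thesis .
qed

lemma srw_pmf_zero: assumes "\<And>k. s \<noteq> 2 * int k - int n" shows "pmf (srw n) s = 0"
  unfolding srw_binomial using assms by (intro pmf_map_outside) auto

lemma srw_pmf_max: assumes "n \<ge> 1" shows "pmf (srw n) s \<le> 1 / sqrt n"
proof (cases "\<exists>k. s = 2 * int k - int n")
  case True
  then obtain k where k: "s = 2 * int k - int n" by auto
  have "pmf (srw n) s = real (n choose k) / 2^n" unfolding k by (rule srw_pmf_form)
  also have "\<dots> \<le> real (n choose (n div 2)) / 2^n"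
    by (intro divide_right_mono) (auto simp: binomial_maximum)
  also have "\<dots> \<le> 1 / sqrt n" using assms by (rule central_binom_bound)
  finally show ?thesis .
next
  case False
  then show ?thesis using srw_pmf_zero[of s n] by auto
qed

lemma srw_pmf_mono:
  assumes "0 \<le> t" "t \<le> s" "even (s - t)"
  shows "pmf (srw n) s \<le> pmf (srw n) t"
proof (cases "\<exists>k. s = 2 * int k - int n")
  case True
  then obtain k where k: "s = 2 * int k - int n" by auto
  define i where "i = nat ((t + int n) div 2)"
  have ti: "t = 2 * int i - int n" using assms k unfolding i_def by auto
  have ik: "i \<le> k" using assms k ti by linarith
  have ni: "n div 2 \<le> i" using assms ti by linarith
  have "n choose k \<le> n choose i"
  proof (cases "k \<le> n")
    case True then show ?thesis using ik ni binomial_antimono by blast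
  qed (simp add: binomial_eq_0)
  then show ?thesis unfolding k ti srw_pmf_form by (intro divide_right_mono) auto
next
  case False
  then show ?thesis using srw_pmf_zero[of s n] by auto
qed

lemma srw_pmf_mono2:
  assumes "1 \<le> t" "t \<le> s"
  shows "pmf (srw n) s \<le> pmf (srw n) t + pmf (srw n) (t - 1)"
proof (cases "even (s - t)")
  case True
  then have "pmf (srw n) s \<le> pmf (srw n) t" using assms by (intro srw_pmf_mono) auto
  then show ?thesis using pmf_nonneg[of "srw n" "t-1"] by linarith
next
  case False
  then have "pmf (srw n) s \<le> pmf (srw n) (t-1)" using assms by (intro srw_pmf_mono) auto
  then show ?thesis using pmf_nonneg[of "srw n" "t"] by linarith
qed

lemma alt_sum_subsets:
  fixes U V :: "'a set"
  assumes "finite U" "V \<subseteq> U"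
  shows "(\<Sum>T\<in>Pow U. if V \<subseteq> T then (-1::real) ^ card T else 0) = (if U = V then (-1) ^ card V else 0)"
proof -
  have "(\<Sum>T\<in>Pow U. if V \<subseteq> T then (-1::real) ^ card T else 0) = (\<Sum>T\<in>{T\<in>Pow U. V \<subseteq> T}. (-1::real) ^ card T)"
    using assms by (intro sum.inter_filter[symmetric]) auto
  also have "{T\<in>Pow U. V \<subseteq> T} = {T. T \<subseteq> U \<and> V \<subseteq> T}" by auto
  finally have eq: "(\<Sum>T\<in>Pow U. if V \<subseteq> T then (-1::real) ^ card T else 0) = (\<Sum>T\<in>{T. T \<subseteq> U \<and> V \<subseteq> T}. (-1::real) ^ card T)" .
  show ?thesis
  proof (cases "U = V")
    case True
    then have "{T. T \<subseteq> U \<and> V \<subseteq> T} = {V}" by auto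
    then show ?thesis using eq True by simp
  next
    case False
    then have "V \<subset> U" using assms by auto
    have fin: "finite {T. T \<subseteq> U \<and> V \<subseteq> T}" using assms by simp
    have "(\<Sum>T\<in>{T. T \<subseteq> U \<and> V \<subseteq> T}. (-1::real) ^ card T) = 0"
      apply (rule sum_alternating_cancels[OF fin])
      using card_subsupersets_even_odd[OF assms(1) \<open>V \<subset> U\<close>] by (simp add: conj_assoc)
    then show ?thesis using eq False by simp
  qed
qed

locale sieve =
  fixes S :: "nat set" and R :: nat
  assumes finS: "finite S" and primeS: "\<And>p. p \<in> S \<Longrightarrow> prime p" and R1: "R \<ge> 1"
begin

definition fS :: "nat set \<Rightarrow> real" where "fS U = (\<Prod>p\<in>U. real p - 1)"
definition Rset :: "nat set set" where "Rset = {U. U \<subseteq> S \<and> \<Prod>U \<le> R}"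
definition G :: real where "G = (\<Sum>U\<in>Rset. 1 / fS U)"
definition z :: "nat set \<Rightarrow> real" where "z U = (if U \<in> Rset then 1 / (fS U * G) else 0)"
definition lam :: "nat set \<Rightarrow> real" where
  "lam T = real (\<Prod>T) * (-1) ^ card T * (\<Sum>U\<in>Pow S. if T \<subseteq> U then z U else 0)"

lemma fS_ge1: "U \<subseteq> S \<Longrightarrow> fS U \<ge> 1"
  unfolding fS_def
proof (rule prod_ge_1)
  fix p assume "U \<subseteq> S" "p \<in> U"
  then have "prime p" using primeS by auto
  then have "p \<ge> 2" using prime_ge_2_nat by blast
  then show "1 \<le> real p - 1" by simp
qed

lemma prod_pos: "U \<subseteq> S \<Longrightarrow> \<Prod>U > 0"
  using primeS finite_subset[OF _ finS]
  by (metis (no_types, lifting) in_mono not_prime_0 prod_pos bot_nat_0.not_eq_extremum)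

lemma prod_pos_real: "U \<subseteq> S \<Longrightarrow> real (\<Prod>U) > 0"
  using prod_pos by (simp only: of_nat_0_less_iff)

lemma finite_Rset: "finite Rset"
  unfolding Rset_def using finS by (simp add: finite_subset[of _ "Pow S"] subset_eq)

lemma empty_Rset: "{} \<in> Rset" unfolding Rset_def using R1 by auto

lemma G_ge1: "G \<ge> 1"
proof -
  have "G = 1 / fS {} + (\<Sum>U\<in>Rset - {{}}. 1 / fS U)"
    unfolding G_def using finite_Rset empty_Rset by (simp add: sum.remove)
  moreover have "(\<Sum>U\<in>Rset - {{}}. 1 / fS U) \<ge> 0"
    by (intro sum_nonneg) (auto simp: Rset_def dest!: fS_ge1)
  ultimately show ?thesis by (simp add: fS_def)
qed

lemma sum_if_subset:
  assumes "U \<subseteq> S"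
  shows "(\<Sum>T\<in>Pow S. if T \<subseteq> U then h T else 0) = (\<Sum>T\<in>Pow U. (h T :: real))"
proof -
  have "(\<Sum>T\<in>Pow S. if T \<subseteq> U then h T else 0) = (\<Sum>T\<in>{T\<in>Pow S. T \<subseteq> U}. h T)"
    using finS by (intro sum.inter_filter[symmetric]) auto
  also have "{T\<in>Pow S. T \<subseteq> U} = Pow U" using assms by auto
  finally show ?thesis .
qed

lemma lam_inv:
  assumes "V \<subseteq> S"
  shows "(\<Sum>T\<in>Pow S. if V \<subseteq> T then lam T / real (\<Prod>T) else 0) = (-1) ^ card V * z V"
proof -
  have "(\<Sum>T\<in>Pow S. if V \<subseteq> T then lam T / real (\<Prod>T) else 0)
      = (\<Sum>T\<in>Pow S. \<Sum>U\<in>Pow S. if V \<subseteq> T \<and> T \<subseteq> U then (-1) ^ card T * z U else 0)"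
  proof (rule sum.cong[OF refl])
    fix T assume T: "T \<in> Pow S"
    have "real (\<Prod>T) > 0" using prod_pos_real T by auto
    then have "(if V \<subseteq> T then lam T / real (\<Prod>T) else 0) = (if V \<subseteq> T then (-1) ^ card T * (\<Sum>U\<in>Pow S. if T \<subseteq> U then z U else 0) else 0)"
      unfolding lam_def by simp
    also have "\<dots> = (\<Sum>U\<in>Pow S. if V \<subseteq> T \<and> T \<subseteq> U then (-1) ^ card T * z U else 0)"
      by (auto simp: sum_distrib_left intro!: sum.cong)
    finally show "(if V \<subseteq> T then lam T / real (\<Prod>T) else 0) = (\<Sum>U\<in>Pow S. if V \<subseteq> T \<and> T \<subseteq> U then (-1) ^ card T * z U else 0)" .
  qed
  also have "\<dots> = (\<Sum>U\<in>Pow S. \<Sum>T\<in>Pow S. if V \<subseteq> T \<and> T \<subseteq> U then (-1) ^ card T * z U else 0)"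
    by (rule sum.swap)
  also have "\<dots> = (\<Sum>U\<in>Pow S. z U * (if V \<subseteq> U then (if U = V then (-1) ^ card V else 0) else 0))"
  proof (rule sum.cong[OF refl])
    fix U assume U: "U \<in> Pow S"
    have "(\<Sum>T\<in>Pow S. if V \<subseteq> T \<and> T \<subseteq> U then (-1) ^ card T * z U else 0)
        = z U * (\<Sum>T\<in>Pow S. if T \<subseteq> U then (if V \<subseteq> T then (-1) ^ card T else 0) else 0)"
      by (auto simp: sum_distrib_left intro!: sum.cong)
    also have "\<dots> = z U * (\<Sum>T\<in>Pow U. if V \<subseteq> T then (-1) ^ card T else 0)"
      using U by (subst sum_if_subset) auto
    also have "\<dots> = z U * (if V \<subseteq> U then (if U = V then (-1) ^ card V else 0) else 0)"
    proof (cases "V \<subseteq> U")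
      case True
      then show ?thesis using U finite_subset[OF _ finS] by (simp add: alt_sum_subsets)
    next
      case False
      then have "(\<Sum>T\<in>Pow U. if V \<subseteq> T then (-1::real) ^ card T else 0) = 0"
        by (intro sum.neutral) auto
      then show ?thesis using False by simp
    qed
    finally show "(\<Sum>T\<in>Pow S. if V \<subseteq> T \<and> T \<subseteq> U then (-1) ^ card T * z U else 0) =
       z U * (if V \<subseteq> U then (if U = V then (-1) ^ card V else 0) else 0)" .
  qed
  also have "\<dots> = (\<Sum>U\<in>Pow S. if U = V then z V * (-1) ^ card V else 0)"
    by (intro sum.cong) auto
  also have "\<dots> = (-1) ^ card V * z V" using assms finS by simp
  finally show ?thesis .
qed

lemma lam_empty: "lam {} = 1"
proof -
  have "lam {} = (\<Sum>U\<in>Pow S. z U)" unfolding lam_def by simp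
  also have "\<dots> = (\<Sum>U\<in>Rset. z U)"
    using finS by (intro sum.mono_neutral_right) (auto simp: z_def Rset_def)
  also have "\<dots> = (\<Sum>U\<in>Rset. 1 / fS U) / G" unfolding z_def by (simp add: sum_divide_distrib)
  also have "\<dots> = 1" using G_ge1 unfolding G_def by simp
  finally show ?thesis .
qed

lemma prod_union_inter:
  assumes "T1 \<subseteq> S" "T2 \<subseteq> S"
  shows "real (\<Prod>(T1 \<union> T2)) * real (\<Prod>(T1 \<inter> T2)) = real (\<Prod>T1) * real (\<Prod>T2)"
proof -
  have "finite T1" "finite T2" using assms finite_subset finS by auto
  then have "(\<Prod>(T1 \<union> T2)) * (\<Prod>(T1 \<inter> T2)) = (\<Prod>T1) * (\<Prod>T2)"
    by (rule prod.union_inter)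
  then show ?thesis by (metis of_nat_mult)
qed

lemma prod_as_sum:
  assumes "I \<subseteq> S"
  shows "real (\<Prod>I) = (\<Sum>V\<in>Pow I. fS V)"
proof -
  have fin: "finite I" using assms finite_subset finS by auto
  have "real (\<Prod>I) = (\<Prod>p\<in>I. (real p - 1) + 1)" by (simp add: of_nat_prod)
  also have "\<dots> = (\<Sum>V\<in>Pow I. (\<Prod>p\<in>V. real p - 1) * (\<Prod>p\<in>I-V. 1))"
    by (rule prod_add[OF fin])
  also have "\<dots> = (\<Sum>V\<in>Pow I. fS V)" unfolding fS_def by simp
  finally show ?thesis .
qed

lemma quad_form:
  "(\<Sum>T1\<in>Pow S. \<Sum>T2\<in>Pow S. lam T1 * lam T2 / real (\<Prod>(T1 \<union> T2))) = 1 / G"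
proof -
  define a where "a T = lam T / real (\<Prod>T)" for T
  have step1: "lam T1 * lam T2 / real (\<Prod>(T1 \<union> T2)) = a T1 * a T2 * (\<Sum>V\<in>Pow S. if V \<subseteq> T1 \<and> V \<subseteq> T2 then fS V else 0)"
    if "T1 \<subseteq> S" "T2 \<subseteq> S" for T1 T2
  proof -
    have p1: "real (\<Prod>T1) > 0" "real (\<Prod>T2) > 0" "real (\<Prod>(T1 \<union> T2)) > 0"
      using prod_pos_real that by auto
    have "lam T1 * lam T2 / real (\<Prod>(T1 \<union> T2)) = a T1 * a T2 * real (\<Prod>(T1 \<inter> T2))"
      using prod_union_inter[OF that] p1 unfolding a_def by (simp add: field_simps)
    also have "real (\<Prod>(T1 \<inter> T2)) = (\<Sum>V\<in>Pow (T1 \<inter> T2). fS V)"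
      using that by (intro prod_as_sum) auto
    also have "\<dots> = (\<Sum>V\<in>Pow S. if V \<subseteq> T1 \<inter> T2 then fS V else 0)"
      using that by (subst sum_if_subset) auto
    finally show ?thesis by simp
  qed
  have "(\<Sum>T1\<in>Pow S. \<Sum>T2\<in>Pow S. lam T1 * lam T2 / real (\<Prod>(T1 \<union> T2)))
      = (\<Sum>T1\<in>Pow S. \<Sum>T2\<in>Pow S. \<Sum>V\<in>Pow S. if V \<subseteq> T1 \<and> V \<subseteq> T2 then fS V * a T1 * a T2 else 0)"
  proof (intro sum.cong refl)
    fix T1 T2 assume h: "T1 \<in> Pow S" "T2 \<in> Pow S"
    have "lam T1 * lam T2 / real (\<Prod>(T1 \<union> T2)) = a T1 * a T2 * (\<Sum>V\<in>Pow S. if V \<subseteq> T1 \<and> V \<subseteq> T2 then fS V else 0)"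
      using step1 h by blast
    also have "\<dots> = (\<Sum>V\<in>Pow S. if V \<subseteq> T1 \<and> V \<subseteq> T2 then fS V * a T1 * a T2 else 0)"
      unfolding sum_distrib_left by (intro sum.cong) auto
    finally show "lam T1 * lam T2 / real (\<Prod>(T1 \<union> T2)) = (\<Sum>V\<in>Pow S. if V \<subseteq> T1 \<and> V \<subseteq> T2 then fS V * a T1 * a T2 else 0)" .
  qed
  also have "\<dots> = (\<Sum>V\<in>Pow S. \<Sum>T1\<in>Pow S. \<Sum>T2\<in>Pow S. if V \<subseteq> T1 \<and> V \<subseteq> T2 then fS V * a T1 * a T2 else 0)"
  proof -
    have "(\<Sum>T1\<in>Pow S. \<Sum>T2\<in>Pow S. \<Sum>V\<in>Pow S. if V \<subseteq> T1 \<and> V \<subseteq> T2 then fS V * a T1 * a T2 else 0)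
      = (\<Sum>T1\<in>Pow S. \<Sum>V\<in>Pow S. \<Sum>T2\<in>Pow S. if V \<subseteq> T1 \<and> V \<subseteq> T2 then fS V * a T1 * a T2 else 0)"
      by (rule sum.cong[OF refl], rule sum.swap)
    also have "\<dots> = (\<Sum>V\<in>Pow S. \<Sum>T1\<in>Pow S. \<Sum>T2\<in>Pow S. if V \<subseteq> T1 \<and> V \<subseteq> T2 then fS V * a T1 * a T2 else 0)"
      by (rule sum.swap)
    finally show ?thesis .
  qed
  also have "\<dots> = (\<Sum>V\<in>Pow S. fS V * (\<Sum>T1\<in>Pow S. if V \<subseteq> T1 then a T1 else 0) * (\<Sum>T2\<in>Pow S. if V \<subseteq> T2 then a T2 else 0))"
    by (intro sum.cong refl) (auto simp: sum_distrib_left sum_distrib_right intro!: sum.cong)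
  also have "\<dots> = (\<Sum>V\<in>Pow S. fS V * z V ^ 2)"
  proof (intro sum.cong refl)
    fix V assume "V \<in> Pow S"
    then have "(\<Sum>T1\<in>Pow S. if V \<subseteq> T1 then a T1 else 0) = (-1) ^ card V * z V"
      unfolding a_def by (intro lam_inv) auto
    then show "fS V * (\<Sum>T1\<in>Pow S. if V \<subseteq> T1 then a T1 else 0) * (\<Sum>T2\<in>Pow S. if V \<subseteq> T2 then a T2 else 0) = fS V * z V ^ 2"
      by (simp add: power2_eq_square algebra_simps flip: power_add)
  qed
  also have "\<dots> = (\<Sum>V\<in>Rset. fS V * z V ^ 2)"
    using finS by (intro sum.mono_neutral_right) (auto simp: z_def Rset_def)
  also have "\<dots> = (\<Sum>V\<in>Rset. (1 / fS V) / G^2)"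
  proof (intro sum.cong refl)
    fix V assume "V \<in> Rset"
    moreover then have "fS V \<ge> 1" using fS_ge1 by (auto simp: Rset_def)
    ultimately show "fS V * z V ^ 2 = (1 / fS V) / G^2" using G_ge1
      by (simp add: z_def power2_eq_square field_simps)
  qed
  also have "\<dots> = G / G^2" unfolding G_def by (simp add: sum_divide_distrib)
  also have "\<dots> = 1 / G" using G_ge1 by (simp add: power2_eq_square)
  finally show ?thesis .
qed

end

lemma prod_primes_dvd_iff:
  fixes s :: int
  assumes "finite T" "\<forall>p\<in>T. prime p"
  shows "int (\<Prod>T) dvd s \<longleftrightarrow> (\<forall>p\<in>T. int p dvd s)"
  using assms
proof (induction T rule: finite_induct)
  case empty
  then show ?case by simp
next
  case (insert p T)
  have pp: "prime p" using insert by auto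
  have ndvd: "\<not> p dvd \<Prod>T"
  proof
    assume "p dvd \<Prod>T"
    then obtain q where "q \<in> T" "p dvd q" using prime_dvd_prod_iff[OF insert(1) pp, of id] by auto
    then have "p = q" using insert pp by (intro primes_dvd_imp_eq) auto
    then show False using insert \<open>q \<in> T\<close> by auto
  qed
  have "coprime p (\<Prod>T)"
    using ndvd pp by (intro prime_imp_coprime)
  then have cop: "coprime (int p) (int (\<Prod>T))" by (simp only: coprime_int_iff)
  have e: "int (\<Prod>(insert p T)) = int p * int (\<Prod>T)" using insert by simp
  show ?case
  proof
    assume "int (\<Prod>(insert p T)) dvd s"
    then have "int p dvd s" "int (\<Prod>T) dvd s" unfolding e using dvd_mult_left dvd_mult_right by blast+
    then show "\<forall>q\<in>insert p T. int q dvd s" using insert by auto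
  next
    assume "\<forall>q\<in>insert p T. int q dvd s"
    then have "int p dvd s" "int (\<Prod>T) dvd s" using insert by auto
    then show "int (\<Prod>(insert p T)) dvd s" unfolding e using cop by (intro divides_mult)
  qed
qed

context sieve begin

definition W :: "int \<Rightarrow> real" where
  "W s = (\<Sum>T\<in>Pow S. if int (\<Prod>T) dvd s then lam T else 0)"

lemma dvd_iff: "T \<subseteq> S \<Longrightarrow> int (\<Prod>T) dvd s \<longleftrightarrow> (\<forall>p\<in>T. int p dvd s)"
  using primeS finite_subset[OF _ finS] by (intro prod_primes_dvd_iff) auto

lemma W_coprime:
  assumes "\<forall>p\<in>S. \<not> int p dvd s"
  shows "W s = 1"
proof -
  have "W s = (\<Sum>T\<in>Pow S. if T = {} then lam T else 0)"
    unfolding W_def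
  proof (intro sum.cong refl)
    fix T assume T: "T \<in> Pow S"
    show "(if int (\<Prod>T) dvd s then lam T else 0) = (if T = {} then lam T else 0)"
      using dvd_iff[of T s] T assms by auto
  qed
  also have "\<dots> = lam {}" using finS by simp
  finally show ?thesis using lam_empty by simp
qed

lemma W_sq_sum:
  assumes "finite A"
  shows "(\<Sum>s\<in>A. (W s)^2) = (\<Sum>T1\<in>Pow S. \<Sum>T2\<in>Pow S. lam T1 * lam T2 * real (card {s\<in>A. int (\<Prod>(T1 \<union> T2)) dvd s}))"
proof -
  have "(\<Sum>s\<in>A. (W s)^2) = (\<Sum>s\<in>A. \<Sum>T1\<in>Pow S. \<Sum>T2\<in>Pow S. if int (\<Prod>(T1 \<union> T2)) dvd s then lam T1 * lam T2 else 0)"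
  proof (intro sum.cong refl)
    fix s
    have "(W s)^2 = (\<Sum>T1\<in>Pow S. \<Sum>T2\<in>Pow S. (if int (\<Prod>T1) dvd s then lam T1 else 0) * (if int (\<Prod>T2) dvd s then lam T2 else 0))"
      unfolding W_def power2_eq_square sum_product by simp
    also have "\<dots> = (\<Sum>T1\<in>Pow S. \<Sum>T2\<in>Pow S. if int (\<Prod>(T1 \<union> T2)) dvd s then lam T1 * lam T2 else 0)"
    proof (intro sum.cong refl)
      fix T1 T2 assume h: "T1 \<in> Pow S" "T2 \<in> Pow S"
      have "int (\<Prod>(T1 \<union> T2)) dvd s \<longleftrightarrow> int (\<Prod>T1) dvd s \<and> int (\<Prod>T2) dvd s"
        using dvd_iff[of T1 s] dvd_iff[of T2 s] dvd_iff[of "T1 \<union> T2" s] h by auto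
      then show "(if int (\<Prod>T1) dvd s then lam T1 else 0) * (if int (\<Prod>T2) dvd s then lam T2 else 0) =
         (if int (\<Prod>(T1 \<union> T2)) dvd s then lam T1 * lam T2 else 0)" by auto
    qed
    finally show "(W s)^2 = (\<Sum>T1\<in>Pow S. \<Sum>T2\<in>Pow S. if int (\<Prod>(T1 \<union> T2)) dvd s then lam T1 * lam T2 else 0)" .
  qed
  also have "\<dots> = (\<Sum>T1\<in>Pow S. \<Sum>s\<in>A. \<Sum>T2\<in>Pow S. if int (\<Prod>(T1 \<union> T2)) dvd s then lam T1 * lam T2 else 0)"
    by (rule sum.swap)
  also have "\<dots> = (\<Sum>T1\<in>Pow S. \<Sum>T2\<in>Pow S. \<Sum>s\<in>A. if int (\<Prod>(T1 \<union> T2)) dvd s then lam T1 * lam T2 else 0)"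
    by (rule sum.cong[OF refl], rule sum.swap)
  also have "\<dots> = (\<Sum>T1\<in>Pow S. \<Sum>T2\<in>Pow S. lam T1 * lam T2 * real (card {s\<in>A. int (\<Prod>(T1 \<union> T2)) dvd s}))"
  proof (intro sum.cong refl)
    fix T1 T2
    have "(\<Sum>s\<in>A. if int (\<Prod>(T1 \<union> T2)) dvd s then lam T1 * lam T2 else 0) = (\<Sum>s\<in>{s\<in>A. int (\<Prod>(T1 \<union> T2)) dvd s}. lam T1 * lam T2)"
      using assms by (intro sum.inter_filter[symmetric])
    also have "\<dots> = lam T1 * lam T2 * real (card {s\<in>A. int (\<Prod>(T1 \<union> T2)) dvd s})" by simp
    finally show "(\<Sum>s\<in>A. if int (\<Prod>(T1 \<union> T2)) dvd s then lam T1 * lam T2 else 0) = lam T1 * lam T2 * real (card {s\<in>A. int (\<Prod>(T1 \<union> T2)) dvd s})" .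
  qed
  finally show ?thesis .
qed

lemma card_Rset: "card Rset \<le> R"
proof -
  have inj: "inj_on Prod Rset"
  proof (rule inj_onI)
    fix U1 U2 assume h: "U1 \<in> Rset" "U2 \<in> Rset" "\<Prod>U1 = \<Prod>U2"
    have fin: "finite U1" "finite U2" using h finite_subset[OF _ finS] by (auto simp: Rset_def)
    have *: "p \<in> V" if a1: "p \<in> U" and a2: "\<Prod>U = \<Prod>V" and a3: "U \<subseteq> S" and a4: "V \<subseteq> S" and a5: "finite V" for p U V
    proof -
      have "p dvd \<Prod>U" using a1 a3 finite_subset[OF _ finS] by (intro dvd_prodI) auto
      then have "p dvd \<Prod>V" using a2 by simp
      moreover have "prime p" using a1 a3 primeS by auto
      ultimately obtain q where "q \<in> V" "p dvd q" using prime_dvd_prod_iff[OF a5, of p id] by auto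
      then have "p = q" using a4 primeS \<open>prime p\<close> by (intro primes_dvd_imp_eq) auto
      then show ?thesis using \<open>q \<in> V\<close> by simp
    qed
    show "U1 = U2" using * h fin by (auto simp: Rset_def)
  qed
  have "Prod ` Rset \<subseteq> {1..R}"
    using prod_pos by (auto simp: Rset_def Suc_le_eq)
  then have "card (Prod ` Rset) \<le> card {1..R}" by (intro card_mono) auto
  then show ?thesis using card_image[OF inj] by simp
qed

lemma z_nonneg: "z U \<ge> 0"
proof (cases "U \<in> Rset")
  case True
  then have "fS U \<ge> 1" using fS_ge1 by (auto simp: Rset_def)
  then show ?thesis using G_ge1 True by (simp add: z_def)
qed (simp add: z_def)
  
lemma sum_z: "(\<Sum>U\<in>Pow S. z U) = 1"
  using lam_empty unfolding lam_def by simp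

lemma lam_zero: assumes "T \<subseteq> S" "T \<notin> Rset" shows "lam T = 0"
proof -
  have "(\<Sum>U\<in>Pow S. if T \<subseteq> U then z U else 0) = 0"
  proof (intro sum.neutral ballI)
    fix U assume U: "U \<in> Pow S"
    show "(if T \<subseteq> U then z U else 0) = 0"
    proof (cases "T \<subseteq> U")
      case True
      have "\<Prod>T dvd \<Prod>U" using True U finite_subset[OF _ finS] by (intro prod_dvd_prod_subset) auto
      then have "\<Prod>T \<le> \<Prod>U" using prod_pos[of U] U by (intro dvd_imp_le) auto
      then have "U \<notin> Rset" using assms by (auto simp: Rset_def)
      then show ?thesis by (simp add: z_def)
    qed simp
  qed
  then show ?thesis unfolding lam_def by simp
qed

lemma lam_bound: assumes "T \<in> Rset" shows "\<bar>lam T\<bar> \<le> R"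
proof -
  have "\<bar>\<Sum>U\<in>Pow S. if T \<subseteq> U then z U else 0\<bar> \<le> 1"
  proof -
    have "0 \<le> (\<Sum>U\<in>Pow S. if T \<subseteq> U then z U else 0)" using z_nonneg by (intro sum_nonneg) auto
    moreover have "(\<Sum>U\<in>Pow S. if T \<subseteq> U then z U else 0) \<le> (\<Sum>U\<in>Pow S. z U)"
      using z_nonneg by (intro sum_mono) auto
    ultimately show ?thesis using sum_z by simp
  qed
  moreover have "real (\<Prod>T) \<le> R"
  proof -
    have "\<Prod>T \<le> R" using assms by (auto simp: Rset_def)
    then show ?thesis by (simp only: of_nat_le_iff)
  qed
  ultimately have "real (\<Prod>T) * \<bar>\<Sum>U\<in>Pow S. if T \<subseteq> U then z U else 0\<bar> \<le> real R * 1"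
    by (intro mult_mono) auto
  moreover have "\<bar>real (\<Prod>T)\<bar> = real (\<Prod>T)" by (rule abs_of_nonneg) (simp only: of_nat_0_le_iff)
  ultimately show ?thesis unfolding lam_def abs_mult by simp
qed

lemma sum_abs_lam: "(\<Sum>T\<in>Pow S. \<bar>lam T\<bar>) \<le> real R ^ 2"
proof -
  have "(\<Sum>T\<in>Pow S. \<bar>lam T\<bar>) = (\<Sum>T\<in>Rset. \<bar>lam T\<bar>)"
    using finS lam_zero by (intro sum.mono_neutral_right) (auto simp: Rset_def)
  also have "\<dots> \<le> (\<Sum>T\<in>Rset. real R)" using lam_bound by (intro sum_mono) auto
  also have "\<dots> = card Rset * real R" by simp
  also have "\<dots> \<le> real R * real R" using card_Rset by (intro mult_right_mono) auto
  finally show ?thesis by (simp add: power2_eq_square)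
qed

lemma sieve_main:
  assumes "finite A"
    and cnt: "\<And>T. T \<subseteq> S \<Longrightarrow> \<bar>real (card {s\<in>A. int (\<Prod>T) dvd s}) - X / real (\<Prod>T)\<bar> \<le> 1"
  shows "(\<Sum>s\<in>A. (W s)^2) \<le> X / G + real R ^ 4"
proof -
  define r where "r T = real (card {s\<in>A. int (\<Prod>T) dvd s}) - X / real (\<Prod>T)" for T
  have "(\<Sum>s\<in>A. (W s)^2) = (\<Sum>T1\<in>Pow S. \<Sum>T2\<in>Pow S. lam T1 * lam T2 * (X / real (\<Prod>(T1 \<union> T2)) + r (T1 \<union> T2)))"
    unfolding W_sq_sum[OF assms(1)] r_def by simp
  also have "\<dots> = X * (\<Sum>T1\<in>Pow S. \<Sum>T2\<in>Pow S. lam T1 * lam T2 / real (\<Prod>(T1 \<union> T2)))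
     + (\<Sum>T1\<in>Pow S. \<Sum>T2\<in>Pow S. lam T1 * lam T2 * r (T1 \<union> T2))"
    by (simp add: sum_distrib_left sum.distrib algebra_simps)
  also have "\<dots> = X / G + (\<Sum>T1\<in>Pow S. \<Sum>T2\<in>Pow S. lam T1 * lam T2 * r (T1 \<union> T2))"
    unfolding quad_form by simp
  also have "(\<Sum>T1\<in>Pow S. \<Sum>T2\<in>Pow S. lam T1 * lam T2 * r (T1 \<union> T2)) \<le> (\<Sum>T1\<in>Pow S. \<Sum>T2\<in>Pow S. \<bar>lam T1\<bar> * \<bar>lam T2\<bar>)"
  proof (intro sum_mono)
    fix T1 T2 assume h: "T1 \<in> Pow S" "T2 \<in> Pow S"
    have "\<bar>r (T1 \<union> T2)\<bar> \<le> 1" using cnt[of "T1 \<union> T2"] h unfolding r_def by auto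
    then have "\<bar>lam T1 * lam T2 * r (T1 \<union> T2)\<bar> \<le> \<bar>lam T1\<bar> * \<bar>lam T2\<bar> * 1"
      unfolding abs_mult by (intro mult_left_mono) auto
    then show "lam T1 * lam T2 * r (T1 \<union> T2) \<le> \<bar>lam T1\<bar> * \<bar>lam T2\<bar>" by simp
  qed
  also have "(\<Sum>T1\<in>Pow S. \<Sum>T2\<in>Pow S. \<bar>lam T1\<bar> * \<bar>lam T2\<bar>) = (\<Sum>T\<in>Pow S. \<bar>lam T\<bar>)^2"
    by (simp add: power2_eq_square sum_product)
  also have "\<dots> \<le> (real R ^ 2)^2"
    using sum_abs_lam by (intro power_mono) (auto intro: sum_nonneg)
  finally show ?thesis by simp
qed

end

lemma card_nat_lt_bounds:
  fixes c M :: int and y :: nat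
  assumes "M > 0" "0 \<le> c" "c < M"
  shows "\<bar>real (card {k::nat. c + M * int k < int y}) - real y / real_of_int M\<bar> \<le> 1"
proof -
  define K where "K = {k::nat. c + M * int k < int y}"
  have up: "K \<subseteq> {..< nat \<lceil>real y / M\<rceil>}"
  proof
    fix k assume "k \<in> K"
    then have "M * int k < int y" using assms unfolding K_def by auto
    then have "real_of_int M * real k < real y"
      by (metis of_int_less_iff of_int_mult of_int_of_nat_eq)
    then have "real k < real y / M" using assms by (simp add: field_simps)
    then have "int k < \<lceil>real y / M\<rceil>" by linarith
    then show "k \<in> {..< nat \<lceil>real y / M\<rceil>}" by simp
  qed
  have lo: "{..< nat \<lceil>(real y - c) / M\<rceil>} \<subseteq> K"
  proof
    fix k assume "k \<in> {..< nat \<lceil>(real y - c) / M\<rceil>}"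
    then have "int k < \<lceil>(real y - c) / M\<rceil>" by simp
    then have "real k < (real y - c) / M" by linarith
    then have "real_of_int M * real k < real y - c" using assms by (simp add: field_simps)
    then have "real_of_int (c + M * int k) < real_of_int (int y)" by simp
    then have "c + M * int k < int y" by (simp only: of_int_less_iff)
    then show "k \<in> K" unfolding K_def by simp
  qed
  have finK: "finite K" using up finite_subset by blast
  have c1: "card K \<le> nat \<lceil>real y / M\<rceil>" using card_mono[OF _ up] by simp
  have c2: "nat \<lceil>(real y - c) / M\<rceil> \<le> card K" using card_mono[OF finK lo] by simp
  have "real (card K) \<le> real y / M + 1"
  proof -
    have "real (card K) \<le> real (nat \<lceil>real y / M\<rceil>)" using c1 by simp
    also have "\<dots> = \<lceil>real y / M\<rceil>"
    proof -
      have nn: "0 \<le> real y / real_of_int M" using assms by simp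
      then have "0 \<le> \<lceil>real y / real_of_int M\<rceil>" by simp
      then show ?thesis by (rule of_nat_nat)
    qed
    also have "\<dots> \<le> real y / M + 1" by linarith
    finally show ?thesis .
  qed
  moreover have "real y / M - 1 \<le> real (card K)"
  proof -
    have "real y / M - 1 \<le> (real y - c) / M"
      using assms by (simp add: field_simps)
    also have "\<dots> \<le> real (nat \<lceil>(real y - c) / M\<rceil>)" by linarith
    also have "\<dots> \<le> real (card K)" using c2 by simp
    finally show ?thesis .
  qed
  ultimately show ?thesis unfolding K_def by linarith
qed

lemma count_ap:
  fixes M x b :: int and y :: nat
  assumes "M > 0"
  shows "\<bar>real (card {s. x < s \<and> s \<le> x + int y \<and> [s = b] (mod M)}) - real y / real_of_int M\<bar> \<le> 1"
proof -
  define c where "c = (b - x - 1) mod M"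
  have c0: "0 \<le> c" "c < M" using assms unfolding c_def by auto
  define K where "K = {k::nat. c + M * int k < int y}"
  define h where "h k = x + 1 + c + M * int k" for k
  have eq: "{s. x < s \<and> s \<le> x + int y \<and> [s = b] (mod M)} = h ` K"
  proof (intro equalityI subsetI)
    fix s assume s: "s \<in> {s. x < s \<and> s \<le> x + int y \<and> [s = b] (mod M)}"
    define j where "j = s - x - 1"
    have j: "0 \<le> j" "j < int y" using s unfolding j_def by auto
    have "[s = b] (mod M)" using s by simp
    then have "[s - x - 1 = b - x - 1] (mod M)" by (intro cong_diff) auto
    then have "[j = c] (mod M)" unfolding j_def c_def cong_def by simp
    then have "M dvd (j - c)" by (simp add: cong_iff_dvd_diff)
    then obtain t where t: "j - c = M * t" by (auto elim!: dvdE)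
    have "t \<ge> 0"
    proof (rule ccontr)
      assume "\<not> t \<ge> 0"
      then have "t \<le> -1" by simp
      then have "M * t \<le> M * (-1)" using assms by (intro mult_left_mono) auto
      then show False using t j c0 by simp
    qed
    then have "s = h (nat t)" unfolding h_def using t j_def by simp
    moreover have "nat t \<in> K" unfolding K_def using t j \<open>t \<ge> 0\<close> by simp
    ultimately show "s \<in> h ` K" by blast
  next
    fix s assume "s \<in> h ` K"
    then obtain k where k: "k \<in> K" "s = h k" by auto
    have mk: "M * int k \<ge> 0" using assms by simp
    have ck: "c + M * int k < int y" using k unfolding K_def by simp
    have r1: "x < s" "s \<le> x + int y" using k(2) c0 mk ck unfolding h_def by linarith+
    have "[c = b - x - 1] (mod M)" unfolding c_def cong_def by simp
    then have "[(x + 1) + c = (x + 1) + (b - x - 1)] (mod M)" by (intro cong_add) auto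
    then have "[x + 1 + c = b] (mod M)" by simp
    then have "[x + 1 + c + M * int k = b + 0] (mod M)"
      by (intro cong_add) (auto simp: cong_0_iff)
    then have "[s = b] (mod M)" using k unfolding h_def by simp
    then show "s \<in> {s. x < s \<and> s \<le> x + int y \<and> [s = b] (mod M)}" using r1 by simp
  qed
  have "inj_on h K" unfolding h_def inj_on_def using assms by auto
  then have "card {s. x < s \<and> s \<le> x + int y \<and> [s = b] (mod M)} = card K"
    unfolding eq by (rule card_image)
  then show ?thesis using card_nat_lt_bounds[OF assms c0] unfolding K_def by simp
qed

lemma sum_inv_sq: "N \<ge> 1 \<Longrightarrow> (\<Sum>k=1..N. 1 / (real k)^2) \<le> 2 - 1 / real N"
proof (induction N rule: nat_induct_at_least)
  case base
  then show ?case by simp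
next
  case (Suc N)
  have "(\<Sum>k=1..Suc N. 1 / (real k)^2) = (\<Sum>k=1..N. 1 / (real k)^2) + 1 / (real N + 1)^2"
    by simp
  also have "\<dots> \<le> 2 - 1 / real N + 1 / (real N + 1)^2" using Suc by simp
  also have "\<dots> \<le> 2 - 1 / (real N + 1)"
  proof -
    have "1 / (real N + 1)^2 \<le> 1 / (real N * (real N + 1))"
      using Suc by (intro divide_left_mono) (auto simp: power2_eq_square)
    also have "\<dots> = 1 / real N - 1 / (real N + 1)" using Suc by (simp add: field_simps)
    finally show ?thesis by simp
  qed
  finally show ?case by (simp add: add.commute)
qed

lemma sqfree_prod_pf:
  fixes d :: nat
  assumes "squarefree d"
  shows "\<Prod>(prime_factors d) = d"
proof -
  have d0: "d \<noteq> 0"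
  proof
    assume "d = 0"
    with assms show False by simp
  qed
  have "(\<Prod>p\<in>prime_factors d. p ^ multiplicity p d) = d"
    using prod_prime_factors[OF d0] by simp
  moreover have "(\<Prod>p\<in>prime_factors d. p ^ multiplicity p d) = (\<Prod>p\<in>prime_factors d. p)"
    using assms squarefree_factorial_semiring'[OF d0] by (intro prod.cong) auto
  ultimately show ?thesis by simp
qed

lemma harm_sqfree:
  assumes "R \<ge> (1::nat)"
  shows "harm R \<le> 2 * (\<Sum>d\<in>{d\<in>{1..R}. squarefree d}. 1 / real d)"
proof -
  define D where "D = {d\<in>{1..R}. squarefree d}"
  define \<phi> where "\<phi> m = (squarefree_part m, square_part m)" for m :: nat
  define g where "g p = 1 / (real (fst p) * (real (snd p))^2)" for p :: "nat \<times> nat"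
  have dec: "m = squarefree_part m * square_part m ^ 2" for m :: nat by (rule squarefree_decompose)
  have inj: "inj_on \<phi> {1..R}"
  proof (rule inj_onI)
    fix m1 m2 assume "\<phi> m1 = \<phi> m2"
    then show "m1 = m2" unfolding \<phi>_def using dec[of m1] dec[of m2] by simp
  qed
  have sub: "\<phi> ` {1..R} \<subseteq> D \<times> {1..R}"
  proof
    fix p assume "p \<in> \<phi> ` {1..R}"
    then obtain m where m: "m \<in> {1..R}" "p = \<phi> m" by auto
    have sp0: "squarefree_part m \<noteq> 0" by simp
    have sq0: "square_part m \<noteq> 0" using m by simp
    have "squarefree_part m dvd m" using dec[of m] by (metis dvd_triv_left)
    then have l1: "squarefree_part m \<le> m" using m by (intro dvd_imp_le) auto
    have l2: "square_part m \<le> m"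
    proof -
      have "square_part m \<le> square_part m ^ 2" using sq0 by (simp add: power2_eq_square)
      also have "square_part m ^ 2 \<le> m" using dec[of m] sp0 m
        by (metis dvd_imp_le dvd_triv_right atLeastAtMost_iff less_eq_Suc_le One_nat_def)
      finally show ?thesis .
    qed
    have l3: "1 \<le> squarefree_part m" "1 \<le> square_part m" using sp0 sq0 by (simp_all only: One_nat_def Suc_le_eq gr0I)
    have "squarefree_part m \<in> {1..R}" "square_part m \<in> {1..R}" using m l1 l2 l3 by simp_all
    then show "p \<in> D \<times> {1..R}" using m unfolding D_def \<phi>_def by auto
  qed
  have "harm R = (\<Sum>m\<in>{1..R}. 1 / real m)" unfolding harm_def by (simp add: divide_inverse)
  also have "\<dots> = (\<Sum>m\<in>{1..R}. g (\<phi> m))"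
  proof (intro sum.cong refl)
    fix m :: nat
    have "real m = real (squarefree_part m) * real (square_part m)^2"
      using dec[of m] by (metis of_nat_mult of_nat_power)
    then show "1 / real m = g (\<phi> m)" unfolding g_def \<phi>_def by simp
  qed
  also have "\<dots> = (\<Sum>p\<in>\<phi> ` {1..R}. g p)" using sum.reindex[OF inj, of g] by simp
  also have "\<dots> \<le> (\<Sum>p\<in>D \<times> {1..R}. g p)"
    using sub by (intro sum_mono2) (auto simp: D_def g_def)
  also have "\<dots> = (\<Sum>d\<in>D. \<Sum>k\<in>{1..R}. g (d,k))"
    by (simp add: sum.cartesian_product)
  also have "\<dots> = (\<Sum>d\<in>D. (1 / real d) * (\<Sum>k\<in>{1..R}. 1 / (real k)^2))"
    unfolding g_def by (simp add: sum_distrib_left)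
  also have "\<dots> \<le> (\<Sum>d\<in>D. (1 / real d) * 2)"
  proof (intro sum_mono mult_left_mono)
    have "0 \<le> 1 / real R" by simp
    then show "(\<Sum>k\<in>{1..R}. 1 / (real k)^2) \<le> 2" using sum_inv_sq[OF assms] by linarith
  qed auto
  also have "\<dots> = 2 * (\<Sum>d\<in>D. 1 / real d)" by (simp add: sum_distrib_left mult.commute)
  finally show ?thesis unfolding D_def .
qed

definition gq :: "nat set \<Rightarrow> real" where "gq V = (\<Prod>p\<in>V. 1 / (real p - 1))"

lemma gq_nonneg: "(\<forall>p\<in>V. prime p) \<Longrightarrow> gq V \<ge> 0"
  unfolding gq_def by (intro prod_nonneg) (auto simp: prime_gt_0_nat Suc_le_eq)

lemma H_lower:
  assumes "R \<ge> (1::nat)"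
  shows "(\<Sum>d\<in>{d\<in>{1..R}. squarefree d}. 1 / real d)
     \<le> (\<Sum>V\<in>Pow {p. prime p \<and> p \<le> R}. if \<Prod>V \<le> R then gq V else 0)"
proof -
  define P where "P = {p. prime p \<and> p \<le> R}"
  define X where "X = {V\<in>Pow P. \<Prod>V \<le> R}"
  have finP: "finite P" unfolding P_def by simp
  have finX: "finite X" unfolding X_def using finP by simp
  have sub: "{d\<in>{1..R}. squarefree d} \<subseteq> Prod ` X"
  proof
    fix d assume d: "d \<in> {d\<in>{1..R}. squarefree d}"
    have "\<Prod>(prime_factors d) = d" using d sqfree_prod_pf by auto
    moreover have "prime_factors d \<subseteq> P"
    proof
      fix p assume p: "p \<in> prime_factors d"
      then have "p dvd d" "prime p" by (auto simp: in_prime_factors_iff)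
      then have "p \<le> d" using d by (intro dvd_imp_le) auto
      then show "p \<in> P" using d \<open>prime p\<close> unfolding P_def by auto
    qed
    ultimately show "d \<in> Prod ` X" unfolding X_def using d by (auto intro!: image_eqI[of _ _ "prime_factors d"])
  qed
  have "(\<Sum>d\<in>{d\<in>{1..R}. squarefree d}. 1 / real d) \<le> (\<Sum>d\<in>Prod ` X. 1 / real d)"
    using sub finX by (intro sum_mono2) auto
  also have "\<dots> \<le> sum ((\<lambda>d. 1 / real d) \<circ> Prod) X"
    by (rule sum_image_le[OF finX]) (auto intro: prod_nonneg)
  also have "\<dots> = (\<Sum>V\<in>X. 1 / real (\<Prod>V))" by (simp add: o_def)
  also have "\<dots> \<le> (\<Sum>V\<in>X. gq V)"
  proof (intro sum_mono)
    fix V assume V: "V \<in> X"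
    then have "V \<subseteq> P" unfolding X_def by auto
    then have pr: "\<forall>p\<in>V. prime p" "finite V" using finite_subset[OF _ finP] unfolding P_def by auto
    have ge2: "\<forall>p\<in>V. real p \<ge> 2" using pr by (auto dest: prime_ge_2_nat)
    have pos: "0 < (\<Prod>p\<in>V. real p - 1)" using ge2 by (intro prod_pos) auto
    have le: "(\<Prod>p\<in>V. real p - 1) \<le> (\<Prod>p\<in>V. real p)" using ge2 by (intro prod_mono) auto
    have "1 / real (\<Prod>V) = 1 / (\<Prod>p\<in>V. real p)" by simp
    also have "\<dots> \<le> 1 / (\<Prod>p\<in>V. real p - 1)" using pos le by (intro divide_left_mono) auto
    also have "\<dots> = gq V" unfolding gq_def by (simp add: prod_dividef)
    finally show "1 / real (\<Prod>V) \<le> gq V" .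
  qed
  also have "\<dots> = (\<Sum>V\<in>Pow P. if \<Prod>V \<le> R then gq V else 0)"
    unfolding X_def using finP by (intro sum.inter_filter) auto
  finally show ?thesis unfolding P_def .
qed

lemma G_split:
  fixes q R :: nat
  defines "P \<equiv> {p. prime p \<and> p \<le> R}" and "S \<equiv> {p. prime p \<and> p \<le> R \<and> \<not> p dvd q}"
    and "Q \<equiv> {p. prime p \<and> p \<le> R \<and> p dvd q}"
  shows "(\<Sum>V\<in>Pow P. if \<Prod>V \<le> R then gq V else 0)
     \<le> (\<Sum>U\<in>Pow S. if \<Prod>U \<le> R then gq U else 0) * (\<Prod>p\<in>Q. real p / (real p - 1))"
proof -
  define h where "h V = (if \<Prod>V \<le> R then gq V else 0)" for V
  have finP: "finite P" "finite S" "finite Q" unfolding P_def S_def Q_def by auto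
  have hnn: "h V \<ge> 0" if "V \<subseteq> P" for V unfolding h_def using that gq_nonneg[of V] by (auto simp: P_def)
  have fin2: "finite (Pow S \<times> Pow Q)" using finP by simp
  have "Pow P \<subseteq> (\<lambda>(U,W). U \<union> W) ` (Pow S \<times> Pow Q)"
  proof
    fix V assume "V \<in> Pow P"
    then have "V = (V \<inter> S) \<union> (V \<inter> Q)" "(V \<inter> S, V \<inter> Q) \<in> Pow S \<times> Pow Q"
      unfolding P_def S_def Q_def by auto
    then show "V \<in> (\<lambda>(U,W). U \<union> W) ` (Pow S \<times> Pow Q)"
      by (intro image_eqI[where x="(V \<inter> S, V \<inter> Q)"]) simp_all
  qed
  then have "(\<Sum>V\<in>Pow P. h V) \<le> (\<Sum>V\<in>(\<lambda>(U,W). U \<union> W) ` (Pow S \<times> Pow Q). h V)"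
    using fin2 hnn by (intro sum_mono2) (auto simp: P_def S_def Q_def)
  also have "\<dots> \<le> sum (h \<circ> (\<lambda>(U,W). U \<union> W)) (Pow S \<times> Pow Q)"
  proof (rule sum_image_le[OF fin2])
    fix i assume "i \<in> Pow S \<times> Pow Q"
    then obtain U W where "i = (U,W)" "U \<subseteq> S" "W \<subseteq> Q" by auto
    moreover then have "U \<union> W \<subseteq> P" unfolding S_def Q_def P_def by auto
    ultimately show "0 \<le> h ((\<lambda>(U,W). U \<union> W) i)" using hnn by simp
  qed
  also have "\<dots> = (\<Sum>UW\<in>Pow S \<times> Pow Q. h ((\<lambda>(U,W). U \<union> W) UW))" by (simp add: o_def)
  also have "\<dots> \<le> (\<Sum>UW\<in>Pow S \<times> Pow Q. h (fst UW) * gq (snd UW))"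
  proof (intro sum_mono)
    fix UW assume "UW \<in> Pow S \<times> Pow Q"
    then obtain U W where UW: "UW = (U,W)" "U \<subseteq> S" "W \<subseteq> Q" by auto
    have fU: "finite U" "finite W" using UW finP finite_subset by auto
    have disj: "U \<inter> W = {}" using UW unfolding S_def Q_def by auto
    have g: "gq (U \<union> W) = gq U * gq W" unfolding gq_def using fU disj by (rule prod.union_disjoint)
    have gn: "gq U \<ge> 0" "gq W \<ge> 0" using UW(2,3) unfolding S_def Q_def by (auto intro!: gq_nonneg)
    have pp: "\<Prod>(U \<union> W) > 0" using UW unfolding S_def Q_def
      by (intro prod_pos) (auto dest: prime_gt_0_nat)
    have "\<Prod>U dvd \<Prod>(U \<union> W)" using fU by (intro prod_dvd_prod_subset) auto
    then have "\<Prod>U \<le> \<Prod>(U \<union> W)" using pp by (intro dvd_imp_le) auto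
    then have "h (U \<union> W) \<le> h U * gq W" unfolding h_def g using gn by auto
    then show "h ((\<lambda>(U,W). U \<union> W) UW) \<le> h (fst UW) * gq (snd UW)" using UW by simp
  qed
  also have "\<dots> = (\<Sum>U\<in>Pow S. h U) * (\<Sum>W\<in>Pow Q. gq W)"
    by (simp add: sum_product sum.cartesian_product case_prod_unfold)
  also have "(\<Sum>W\<in>Pow Q. gq W) = (\<Prod>p\<in>Q. real p / (real p - 1))"
  proof -
    have "(\<Prod>p\<in>Q. 1 / (real p - 1) + 1) = (\<Sum>W\<in>Pow Q. (\<Prod>p\<in>W. 1 / (real p - 1)) * (\<Prod>p\<in>Q-W. 1))"
      by (rule prod_add[OF finP(3)])
    moreover have "(\<Prod>p\<in>Q. 1 / (real p - 1) + 1) = (\<Prod>p\<in>Q. real p / (real p - 1))"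
    proof (intro prod.cong refl)
      fix p assume "p \<in> Q"
      then have "real p \<ge> 2" unfolding Q_def by (auto dest: prime_ge_2_nat)
      then show "1 / (real p - 1) + 1 = real p / (real p - 1)" by (simp add: field_simps)
    qed
    ultimately show ?thesis unfolding gq_def by simp
  qed
  finally show ?thesis unfolding h_def .
qed

lemma Q_ratio:
  fixes q R :: nat
  assumes "q \<ge> 1"
  shows "(\<Prod>p\<in>{p. prime p \<and> p \<le> R \<and> p dvd q}. real p / (real p - 1)) \<le> real q / real (totient q)"
proof -
  define Q where "Q = {p. prime p \<and> p \<le> R \<and> p dvd q}"
  define F where "F = prime_factors q"
  have QF: "Q \<subseteq> F" unfolding Q_def F_def using assms by (auto simp: in_prime_factors_iff)
  have finF: "finite F" unfolding F_def by simp
  have ge2: "real p \<ge> 2" if "p \<in> F" for p using that unfolding F_def by (auto dest: prime_ge_2_nat simp: in_prime_factors_iff)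
  have fpos: "0 < 1 - 1 / real p" "1 - 1 / real p \<le> 1" if "p \<in> F" for p using ge2[OF that] by (auto simp: field_simps)
  have "(\<Prod>p\<in>F. 1 - 1 / real p) = (\<Prod>p\<in>Q. 1 - 1 / real p) * (\<Prod>p\<in>F - Q. 1 - 1 / real p)"
    using prod.subset_diff[OF QF finF] by (simp add: mult.commute)
  also have "\<dots> \<le> (\<Prod>p\<in>Q. 1 - 1 / real p) * 1"
    using fpos QF by (intro mult_left_mono prod_le_1 prod_nonneg) (auto simp: less_imp_le)
  finally have le: "(\<Prod>p\<in>F. 1 - 1 / real p) \<le> (\<Prod>p\<in>Q. 1 - 1 / real p)" by simp
  have posF: "0 < (\<Prod>p\<in>F. 1 - 1 / real p)" using fpos by (intro prod_pos) auto
  have "(\<Prod>p\<in>Q. real p / (real p - 1)) = (\<Prod>p\<in>Q. 1 / (1 - 1 / real p))"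
  proof (intro prod.cong refl)
    fix p assume "p \<in> Q"
    then have "real p \<ge> 2" using ge2 QF by auto
    then show "real p / (real p - 1) = 1 / (1 - 1 / real p)" by (simp add: field_simps)
  qed
  also have "\<dots> = 1 / (\<Prod>p\<in>Q. 1 - 1 / real p)" by (simp add: prod_dividef)
  also have "\<dots> \<le> 1 / (\<Prod>p\<in>F. 1 - 1 / real p)" using le posF by (intro divide_left_mono) auto
  also have "\<dots> = real q / real (totient q)"
    unfolding totient_formula2[of q] F_def using assms posF[unfolded F_def] by simp
  finally show ?thesis unfolding Q_def .
qed

lemma sieve_G_eq:
  assumes "sieve S R"
  shows "sieve.G S R = (\<Sum>U\<in>Pow S. if \<Prod>U \<le> R then gq U else 0)"
proof -
  interpret sieve S R by (rule assms)
  have "G = (\<Sum>U\<in>Rset. 1 / fS U)" unfolding G_def ..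
  also have "\<dots> = (\<Sum>U\<in>Rset. gq U)" unfolding fS_def gq_def by (simp add: prod_dividef)
  also have "\<dots> = (\<Sum>U\<in>Pow S. if \<Prod>U \<le> R then gq U else 0)"
  proof -
    have "Rset = {U\<in>Pow S. \<Prod>U \<le> R}" unfolding Rset_def by auto
    then show ?thesis by (simp only:) (intro sum.inter_filter, simp add: finS)
  qed
  finally show ?thesis .
qed

lemma G_lower:
  fixes q R :: nat
  assumes "q \<ge> 1" "R \<ge> 1"
  defines "S \<equiv> {p. prime p \<and> p \<le> R \<and> \<not> p dvd q}"
  shows "sieve S R" "real (totient q) / real q * ln (real R + 1) / 2 \<le> sieve.G S R"
proof -
  show sv: "sieve S R" unfolding S_def using assms by unfold_locales auto
  define X where "X = (\<Prod>p\<in>{p. prime p \<and> p \<le> R \<and> p dvd q}. real p / (real p - 1))"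
  have Xpos: "X \<ge> 0" unfolding X_def by (intro prod_nonneg) (auto dest: prime_gt_1_nat)
  have "ln (real R + 1) \<le> harm R" by (rule ln_le_harm)
  also have "\<dots> \<le> 2 * (\<Sum>d\<in>{d\<in>{1..R}. squarefree d}. 1 / real d)" using assms by (intro harm_sqfree)
  also have "\<dots> \<le> 2 * (\<Sum>V\<in>Pow {p. prime p \<and> p \<le> R}. if \<Prod>V \<le> R then gq V else 0)"
    using H_lower assms by simp
  also have "\<dots> \<le> 2 * (sieve.G S R * X)"
  proof -
    have eqG: "sieve.G S R = (\<Sum>U\<in>Pow S. if \<Prod>U \<le> R then gq U else 0)" by (rule sieve_G_eq[OF sv])
    show ?thesis using G_split[of R q] unfolding eqG unfolding X_def S_def by simp
  qed
  also have "\<dots> \<le> 2 * (sieve.G S R * (real q / real (totient q)))"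
    using Q_ratio[OF assms(1), of R] sieve.G_ge1[OF sv] unfolding X_def by (intro mult_left_mono) auto
  finally have "ln (real R + 1) \<le> 2 * (sieve.G S R * (real q / real (totient q)))" .
  moreover have "real (totient q) > 0" "real q > 0" using assms by auto
  ultimately show "real (totient q) / real q * ln (real R + 1) / 2 \<le> sieve.G S R"
    by (simp add: field_simps)
qed

lemma crt_reduce:
  fixes q :: nat and a :: int and T :: "nat set"
  assumes "finite T" "\<forall>p\<in>T. prime p \<and> \<not> p dvd q"
  obtains b where "\<And>s. ([s = a] (mod int q) \<and> int (\<Prod>T) dvd s) \<longleftrightarrow> [s = b] (mod int q * int (\<Prod>T))"
proof -
  have "coprime q (\<Prod>T)"
  proof (rule prod_coprime_right)
    fix p assume "p \<in> T"
    then have "coprime p q" using assms by (intro prime_imp_coprime) auto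
    then show "coprime q p" by (simp add: coprime_commute)
  qed
  then have cop: "coprime (int q) (int (\<Prod>T))" by (simp only: coprime_int_iff)
  obtain b where b: "[b = a] (mod int q)" "[b = 0] (mod int (\<Prod>T))"
    using binary_chinese_remainder_int[OF cop] by blast
  have "([s = a] (mod int q) \<and> int (\<Prod>T) dvd s) \<longleftrightarrow> [s = b] (mod int q * int (\<Prod>T))" for s
  proof
    assume h: "[s = a] (mod int q) \<and> int (\<Prod>T) dvd s"
    have "[s = b] (mod int q)" using h b(1) by (meson cong_sym cong_trans)
    moreover have "[s = 0] (mod int (\<Prod>T))" using h by (simp add: cong_0_iff)
    then have "[s = b] (mod int (\<Prod>T))" using b(2) by (meson cong_sym cong_trans)
    ultimately show "[s = b] (mod int q * int (\<Prod>T))" using cop by (intro coprime_cong_mult)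
  next
    assume h: "[s = b] (mod int q * int (\<Prod>T))"
    have "[s = b] (mod int q)" using h by (rule cong_dvd_modulus) simp
    then have "[s = a] (mod int q)" using b(1) by (rule cong_trans)
    moreover have "[s = b] (mod int (\<Prod>T))" using h by (rule cong_dvd_modulus) simp
    then have "[s = 0] (mod int (\<Prod>T))" using b(2) by (rule cong_trans)
    then have "int (\<Prod>T) dvd s" by (simp add: cong_0_iff)
    ultimately show "[s = a] (mod int q) \<and> int (\<Prod>T) dvd s" by simp
  qed
  then show ?thesis using that by blast
qed

lemma prime_count:
  fixes q y R :: nat and a x :: int
  assumes q1: "q \<ge> 1" and cop: "coprime a (int q)" and R1: "R \<ge> 1"
  shows "real (card {s. x < s \<and> s \<le> x + int y \<and> prime s \<and> [s = a] (mod int q)})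
     \<le> real R + real R ^ 4 + 2 * real y / (real (totient q) * ln (real R + 1))"
proof -
  define S where "S = {p. prime p \<and> p \<le> R \<and> \<not> p dvd q}"
  have sv: "sieve S R" unfolding S_def using G_lower(1)[OF q1 R1] .
  have Glow: "real (totient q) / real q * ln (real R + 1) / 2 \<le> sieve.G S R"
    unfolding S_def using G_lower(2)[OF q1 R1] .
  interpret sieve S R by (rule sv)
  define A where "A = {s. x < s \<and> s \<le> x + int y \<and> [s = a] (mod int q)}"
  define PS where "PS = {s. x < s \<and> s \<le> x + int y \<and> prime s \<and> [s = a] (mod int q)}"
  define B where "B = {s\<in>A. \<forall>p\<in>S. \<not> int p dvd s}"
  have finA: "finite A" unfolding A_def by (rule finite_subset[of _ "{x<..x + int y}"]) auto
  have sub: "PS \<subseteq> {1..int R} \<union> B"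
  proof
    fix s assume s: "s \<in> PS"
    show "s \<in> {1..int R} \<union> B"
    proof (cases "s \<le> int R")
      case True
      have "s \<ge> 2" using s unfolding PS_def using prime_ge_2_int by auto
      then show ?thesis using True by auto
    next
      case False
      have "\<not> int p dvd s" if "p \<in> S" for p
      proof
        assume d: "int p dvd s"
        have p1: "prime (int p)" using that unfolding S_def by simp
        have p2: "prime s" using s unfolding PS_def by simp
        have "int p = s" using p1 p2 d by (rule primes_dvd_imp_eq)
        then show False using that False unfolding S_def by auto
      qed
      then show ?thesis using s unfolding PS_def B_def A_def by auto
    qed
  qed
  have finB: "finite B" unfolding B_def using finA by simp
  have "real (card PS) \<le> real (card ({1..int R} \<union> B))"
    using sub finB by (intro of_nat_mono card_mono) auto
  also have "\<dots> \<le> real (card {1..int R}) + real (card B)"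
    using card_Un_le[of "{1..int R}" B] by linarith
  also have "real (card {1..int R}) = real R" by simp
  also have "real (card B) = (\<Sum>s\<in>B. (W s)^2)"
    using W_coprime unfolding B_def by simp
  also have "\<dots> \<le> (\<Sum>s\<in>A. (W s)^2)"
    using finA unfolding B_def by (intro sum_mono2) auto
  also have "\<dots> \<le> (real y / real q) / G + real R ^ 4"
  proof (rule sieve_main[OF finA])
    fix T assume T: "T \<subseteq> S"
    have finT: "finite T" using T finite_subset finS by auto
    have "\<forall>p\<in>T. prime p \<and> \<not> p dvd q" using T unfolding S_def by auto
    then obtain b where b: "\<And>s. ([s = a] (mod int q) \<and> int (\<Prod>T) dvd s) \<longleftrightarrow> [s = b] (mod int q * int (\<Prod>T))"
      using crt_reduce[OF finT] by blast
    have eqs: "{s\<in>A. int (\<Prod>T) dvd s} = {s. x < s \<and> s \<le> x + int y \<and> [s = b] (mod int q * int (\<Prod>T))}"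
      unfolding A_def using b by blast
    have pos: "int q * int (\<Prod>T) > 0"
    proof -
      have "int (\<Prod>T) > 0" using prod_pos[OF T] by (simp only: of_nat_0_less_iff)
      moreover have "int q > 0" using q1 by simp
      ultimately show ?thesis by (metis mult_pos_pos)
    qed
    have "\<bar>real (card {s\<in>A. int (\<Prod>T) dvd s}) - real y / real_of_int (int q * int (\<Prod>T))\<bar> \<le> 1"
      unfolding eqs by (rule count_ap[OF pos])
    moreover have "real y / real_of_int (int q * int (\<Prod>T)) = real y / real q / real (\<Prod>T)"
      by simp
    ultimately show "\<bar>real (card {s\<in>A. int (\<Prod>T) dvd s}) - real y / real q / real (\<Prod>T)\<bar> \<le> 1"
      by simp
  qed
  also have "(real y / real q) / G \<le> 2 * real y / (real (totient q) * ln (real R + 1))"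
  proof -
    have tq: "real (totient q) > 0" "real q > 0" using q1 by auto
    have lnp: "ln (real R + 1) > 0" using R1 by simp
    have Gp: "G > 0" using G_ge1 by simp
    have "real y / real q = (real y / real q / G) * G" using Gp by simp
    have "(real y / real q) / G \<le> (real y / real q) / (real (totient q) / real q * ln (real R + 1) / 2)"
      using Glow tq lnp Gp by (intro divide_left_mono) (auto intro!: mult_pos_pos divide_pos_pos)
    also have "\<dots> = 2 * real y / (real (totient q) * ln (real R + 1))"
      using tq lnp by (simp add: field_simps)
    finally show ?thesis .
  qed
  finally show ?thesis unfolding PS_def by simp
qed

lemma block_sum_gt:
  fixes h :: "int \<Rightarrow> real" and Y :: int
  assumes "Y \<ge> 0"
  shows "(\<Sum>j<m. \<Sum>t\<in>{int j * Y<..(int j + 1) * Y}. h t) = (\<Sum>t\<in>{0<..int m * Y}. h t)"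
proof (induction m)
  case 0
  then show ?case by simp
next
  case (Suc m)
  have "{0<..int (Suc m) * Y} = {0<..int m * Y} \<union> {int m * Y<..(int m + 1) * Y}"
  proof -
    have *: "0 \<le> M \<Longrightarrow> 0 \<le> Y \<Longrightarrow> {0<..M+Y} = {0<..M} \<union> {M<..(M::int)+Y}" for M by auto
    have "0 \<le> int m * Y" using assms by simp
    from *[OF this assms] show ?thesis by (simp add: algebra_simps)
  qed
  moreover have "{0<..int m * Y} \<inter> {int m * Y<..(int m + 1) * Y} = {}" by auto
  ultimately have "(\<Sum>t\<in>{0<..int (Suc m) * Y}. h t) = (\<Sum>t\<in>{0<..int m * Y}. h t) + (\<Sum>t\<in>{int m * Y<..(int m + 1) * Y}. h t)"
    by (simp add: sum.union_disjoint)
  then show ?case using Suc by simp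
qed

lemma block_sum_ge:
  fixes h :: "int \<Rightarrow> real" and Y :: int
  assumes "Y \<ge> 0"
  shows "(\<Sum>j<m. \<Sum>t\<in>{int j * Y..<(int j + 1) * Y}. h t) = (\<Sum>t\<in>{0..<int m * Y}. h t)"
proof (induction m)
  case 0
  then show ?case by simp
next
  case (Suc m)
  have "{0..<int (Suc m) * Y} = {0..<int m * Y} \<union> {int m * Y..<(int m + 1) * Y}"
  proof -
    have *: "0 \<le> M \<Longrightarrow> 0 \<le> Y \<Longrightarrow> {0..<M+Y} = {0..<M} \<union> {M..<(M::int)+Y}" for M by auto
    have "0 \<le> int m * Y" using assms by simp
    from *[OF this assms] show ?thesis by (simp add: algebra_simps)
  qed
  moreover have "{0..<int m * Y} \<inter> {int m * Y..<(int m + 1) * Y} = {}" by auto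
  ultimately have "(\<Sum>t\<in>{0..<int (Suc m) * Y}. h t) = (\<Sum>t\<in>{0..<int m * Y}. h t) + (\<Sum>t\<in>{int m * Y..<(int m + 1) * Y}. h t)"
    by (simp add: sum.union_disjoint)
  then show ?case using Suc by simp
qed

lemma pmf_sum_le1: "finite X \<Longrightarrow> (\<Sum>t\<in>X. pmf p t) \<le> 1"
  using measure_measure_pmf_finite[of X p] measure_pmf.prob_le_1[of p X] by simp

lemma shift_sum: "(\<Sum>t\<in>{a<..b::int}. h (t - 1)) = (\<Sum>t\<in>{a..<b}. (h t :: real))"
  by (rule sum.reindex_bij_witness[of _ "\<lambda>t. t + 1" "\<lambda>t. t - 1"]) auto

lemma srw_pmf_gt: assumes "s > int n" shows "pmf (srw n) s = 0"
proof (cases "\<exists>k. s = 2 * int k - int n")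
  case True
  then obtain k where k: "s = 2 * int k - int n" by auto
  then have "k > n" using assms by linarith
  then show ?thesis unfolding k srw_pmf_form by (simp add: binomial_eq_0)
next
  case False
  then show ?thesis using srw_pmf_zero[of s n] by auto
qed

lemma count_bound:
  fixes \<epsilon> :: real and q n :: nat and a x :: int
  assumes eps: "0 < \<epsilon>" and q1: "q \<ge> 1" and cop: "coprime a (int q)" and n2: "n \<ge> 2"
    and qn: "real q \<le> real n powr (1/4 - \<epsilon>)"
  shows "real (card {s. x < s \<and> s \<le> x + int (nat \<lceil>sqrt (real n)\<rceil>) \<and> prime s \<and> [s = a] (mod int q)})
     \<le> (32 + 2 / \<epsilon>) * real (nat \<lceil>sqrt (real n)\<rceil>) / (real (totient q) * ln (real n))"
proof -
  define y where "y = nat \<lceil>sqrt (real n)\<rceil>"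
  define nr where "nr = real n"
  have nr2: "nr \<ge> 2" unfolding nr_def using n2 by simp
  define t where "t = nr powr (1/16)"
  have t1: "t \<ge> 1" unfolding t_def using nr2 by (intro ge_one_powr_ge_zero) auto
  define R where "R = nat \<lfloor>t\<rfloor>"
  have R1: "R \<ge> 1" unfolding R_def using t1 by linarith
  have Rt: "real R \<le> t" "t \<le> real R + 1" unfolding R_def using t1 by linarith+
  have R4: "real R ^ 4 \<le> nr powr (1/4)"
  proof -
    have "real R ^ 4 \<le> t ^ 4" using Rt by (intro power_mono) auto
    also have "t ^ 4 = nr powr (1/4)" unfolding t_def using nr2 by (subst powr_power) auto
    finally show ?thesis .
  qed
  have Rle: "real R \<le> nr powr (1/4)"
  proof -
    have "t \<le> nr powr (1/4)" unfolding t_def using nr2 by (intro powr_mono) auto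
    then show ?thesis using Rt by linarith
  qed
  have lnn: "ln nr > 0" using nr2 by simp
  have lnR: "ln nr / 16 \<le> ln (real R + 1)"
  proof -
    have "ln nr / 16 = ln t" unfolding t_def by simp
    also have "\<dots> \<le> ln (real R + 1)" using Rt t1 by (subst ln_le_cancel_iff) auto
    finally show ?thesis .
  qed
  have y1: "sqrt nr \<le> real y" unfolding y_def nr_def by linarith
  have tq: "real (totient q) \<ge> 1" "real (totient q) \<le> real q" using q1 totient_le[of q]
    by (auto simp: Suc_le_eq)
  have keps: "ln nr \<le> nr powr \<epsilon> / \<epsilon>"
  proof -
    have "\<epsilon> * ln nr = ln (nr powr \<epsilon>)" by simp
    also have "\<dots> \<le> nr powr \<epsilon> - 1" using nr2 by (intro ln_le_minus_one) auto
    finally have "\<epsilon> * ln nr \<le> nr powr \<epsilon>" by simp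
    then show ?thesis using eps by (simp add: field_simps)
  qed
  have key: "real (totient q) * ln nr * nr powr (1/4) \<le> real y / \<epsilon>"
  proof -
    have "real (totient q) * ln nr * nr powr (1/4) \<le> nr powr (1/4 - \<epsilon>) * (nr powr \<epsilon> / \<epsilon>) * nr powr (1/4)"
      using tq qn keps lnn unfolding nr_def by (intro mult_right_mono mult_mono) auto
    also have "\<dots> = (nr powr (1/4 - \<epsilon>) * nr powr \<epsilon> * nr powr (1/4)) / \<epsilon>" by simp
    also have "nr powr (1/4 - \<epsilon>) * nr powr \<epsilon> * nr powr (1/4) = nr powr (1/2)"
      by (simp add: powr_add[symmetric])
    also have "nr powr (1/2) = sqrt nr" using nr2 by (simp add: powr_half_sqrt)
    also have "sqrt nr / \<epsilon> \<le> real y / \<epsilon>" using y1 eps by (intro divide_right_mono) auto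
    finally show ?thesis .
  qed
  have A: "real (card {s. x < s \<and> s \<le> x + int y \<and> prime s \<and> [s = a] (mod int q)})
      \<le> real R + real R ^ 4 + 2 * real y / (real (totient q) * ln (real R + 1))"
    by (rule prime_count[OF q1 cop R1])
  have B: "2 * real y / (real (totient q) * ln (real R + 1)) \<le> 2 * real y / (real (totient q) * (ln nr / 16))"
    using lnR lnn tq R1 by (intro divide_left_mono mult_left_mono mult_pos_pos) auto
  have C: "real R + real R ^ 4 \<le> 2 * nr powr (1/4)" using R4 Rle by simp
  have D: "2 * nr powr (1/4) \<le> 2 * (real y / \<epsilon>) / (real (totient q) * ln nr)"
  proof -
    have pos: "real (totient q) * ln nr > 0" using tq lnn by simp
    have gen: "\<And>c P::real. c > 0 \<Longrightarrow> 2 * P = 2 * (c * P) / c" by simp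
    have "2 * nr powr (1/4) = 2 * (real (totient q) * ln nr * nr powr (1/4)) / (real (totient q) * ln nr)"
      using pos by (rule gen)
    also have "\<dots> \<le> 2 * (real y / \<epsilon>) / (real (totient q) * ln nr)"
      using key pos by (intro divide_right_mono mult_left_mono) auto
    finally show ?thesis .
  qed
  have E: "2 * (real y / \<epsilon>) / (real (totient q) * ln nr) + 2 * real y / (real (totient q) * (ln nr / 16))
      = (32 + 2 / \<epsilon>) * real y / (real (totient q) * ln nr)"
    using eps lnn tq by (simp add: field_simps)
  from A B C D E have "real (card {s. x < s \<and> s \<le> x + int y \<and> prime s \<and> [s = a] (mod int q)})
     \<le> (32 + 2 / \<epsilon>) * real y / (real (totient q) * ln nr)" by linarith
  then show ?thesis unfolding y_def nr_def .
qed

theorem theorem1p1: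
  fixes \<epsilon> :: real
  assumes "0 < \<epsilon>" and "\<epsilon> \<le> 1/4"
  shows "\<exists>C. \<forall>(q::nat) (a::int) (n::nat).
           odd q \<and> q \<ge> 1 \<and> coprime a (int q) \<and> n \<ge> 2 \<and> real q \<le> real n powr (1/4 - \<epsilon>) \<longrightarrow>
           measure_pmf.prob (srw n) {s. prime s \<and> [s = a] (mod int q)}
             \<le> C * (1 / real (totient q)) * (1 / ln (real n))"
proof -
  define C1 where "C1 = 32 + 2 / \<epsilon>"
  have C1pos: "C1 > 0" unfolding C1_def using assms by (simp add: add_pos_pos)
  show ?thesis
  proof (intro exI[of _ "6 * C1"] allI impI)
    fix q :: nat and a :: int and n :: nat
    assume h: "odd q \<and> q \<ge> 1 \<and> coprime a (int q) \<and> n \<ge> 2 \<and> real q \<le> real n powr (1/4 - \<epsilon>)"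
    then have q1: "q \<ge> 1" and cop: "coprime a (int q)" and n2: "n \<ge> 2"
      and qn: "real q \<le> real n powr (1/4 - \<epsilon>)" by auto
    define y where "y = nat \<lceil>sqrt (real n)\<rceil>"
    define Y where "Y = int y"
    define f where "f = pmf (srw n)"
    define E where "E = {s::int. prime s \<and> [s = a] (mod int q)}"
    define g where "g s = (if s \<in> E then f s else 0)" for s
    define K where "K = C1 * real y / (real (totient q) * ln (real n))"
    define Bk where "Bk j = {int j * Y<..(int j + 1) * Y}" for j :: nat
    define Dk where "Dk j = {int j * Y..<(int j + 1) * Y}" for j :: nat
    define bnd where "bnd j = (if j = 0 then 1 / sqrt (real n) else ((\<Sum>t\<in>Bk (j-1). f t) + (\<Sum>t\<in>Dk (j-1). f t)) / real y)" for j :: nat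
    have sq1: "sqrt (real n) \<ge> 1" using n2 by simp
    have y1: "sqrt (real n) \<le> real y" unfolding y_def by linarith
    have y2: "real y \<le> 2 * sqrt (real n)" unfolding y_def using sq1 by linarith
    have ypos: "real y > 0" using y1 sq1 by linarith
    have Y0: "Y \<ge> 1" unfolding Y_def using ypos by simp
    have lnn: "ln (real n) > 0" using n2 by simp
    have tq: "real (totient q) > 0" using q1 by simp
    have Kpos: "K \<ge> 0" unfolding K_def using C1pos lnn tq ypos by simp
    have fnn: "\<And>t. f t \<ge> 0" unfolding f_def by simp
    have cnt: "real (card {s. x < s \<and> s \<le> x + Y \<and> prime s \<and> [s = a] (mod int q)}) \<le> K" for x
      using count_bound[OF assms(1) q1 cop n2 qn, of x] unfolding K_def C1_def Y_def y_def by simp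
    define Z where "Z = {0<..int n * Y}"
    have step1: "measure_pmf.prob (srw n) E \<le> (\<Sum>t\<in>Z. g t)"
    proof -
      have sub: "E \<subseteq> (E \<inter> Z) \<union> {s. s > int n}"
      proof
        fix s assume s: "s \<in> E"
        then have "s > 0" unfolding E_def using prime_gt_0_int by auto
        moreover have nY: "int n \<le> int n * Y" using mult_left_mono[OF Y0, of "int n"] by simp
        ultimately have "\<not> s > int n \<Longrightarrow> 0 < s \<and> s \<le> int n * Y" by linarith
        then show "s \<in> (E \<inter> Z) \<union> {s. s > int n}" using s unfolding Z_def by auto
      qed
      have z: "measure_pmf.prob (srw n) {s. s > int n} = 0"
        using srw_pmf_gt by (subst measure_pmf_zero_iff) (auto simp: set_pmf_eq)
      have "measure_pmf.prob (srw n) E \<le> measure_pmf.prob (srw n) ((E \<inter> Z) \<union> {s. s > int n})"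
        using sub by (intro measure_pmf.finite_measure_mono) auto
      also have "\<dots> = measure_pmf.prob (srw n) (E \<inter> Z)"
        using z by (intro measure_pmf.measure_zero_union) auto
      also have "measure_pmf.prob (srw n) (E \<inter> Z) = (\<Sum>t\<in>E \<inter> Z. f t)"
        unfolding f_def by (rule measure_measure_pmf_finite) (simp add: Z_def)
      also have "(\<Sum>t\<in>E \<inter> Z. f t) = (\<Sum>t\<in>Z. g t)"
        unfolding g_def by (subst Int_commute, rule sum.inter_restrict) (simp add: Z_def)
      finally show ?thesis .
    qed
    have step2: "(\<Sum>t\<in>Z. g t) = (\<Sum>j<n. \<Sum>t\<in>Bk j. g t)"
      unfolding Z_def Bk_def using block_sum_gt[of Y g n] Y0 by simp
    have bnn: "bnd j \<ge> 0" for j unfolding bnd_def using fnn ypos by (auto intro!: add_nonneg_nonneg sum_nonneg divide_nonneg_pos)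
    have step3: "(\<Sum>t\<in>Bk j. g t) \<le> K * bnd j" if "j < n" for j
    proof -
      have pt: "f s \<le> bnd j" if s: "s \<in> Bk j" for s
      proof (cases "j = 0")
        case True
        then show ?thesis unfolding bnd_def f_def using srw_pmf_max[of n s] n2 by simp
      next
        case False
        have cardB: "card (Bk (j-1)) = y" unfolding Bk_def Y_def by (simp add: algebra_simps)
        have "real y * f s = (\<Sum>t\<in>Bk (j-1). f s)" using cardB by simp
        also have "\<dots> \<le> (\<Sum>t\<in>Bk (j-1). f t + f (t - 1))"
        proof (intro sum_mono)
          fix t assume t: "t \<in> Bk (j-1)"
          have "int (j - 1) * Y \<ge> 0" using Y0 by simp
          then have "1 \<le> t" using t unfolding Bk_def by auto
          moreover have "t \<le> s"
          proof -
            have "t \<le> (int (j-1) + 1) * Y" using t unfolding Bk_def by auto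
            also have "(int (j-1) + 1) = int j" using False by simp
            finally show ?thesis using s unfolding Bk_def by auto
          qed
          ultimately show "f s \<le> f t + f (t - 1)" unfolding f_def by (rule srw_pmf_mono2)
        qed
        also have "\<dots> = (\<Sum>t\<in>Bk (j-1). f t) + (\<Sum>t\<in>Dk (j-1). f t)"
          unfolding sum.distrib Bk_def Dk_def shift_sum ..
        finally have "real y * f s \<le> (\<Sum>t\<in>Bk (j-1). f t) + (\<Sum>t\<in>Dk (j-1). f t)" .
        then show ?thesis unfolding bnd_def using False ypos by (simp add: field_simps)
      qed
      have "(\<Sum>t\<in>Bk j. g t) \<le> (\<Sum>t\<in>Bk j. if t \<in> E then bnd j else 0)"
        unfolding g_def using pt by (intro sum_mono) auto
      also have "\<dots> = real (card {t\<in>Bk j. t \<in> E}) * bnd j"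
        by (simp add: sum.inter_filter[symmetric] Bk_def)
      also have "{t\<in>Bk j. t \<in> E} = {s. int j * Y < s \<and> s \<le> int j * Y + Y \<and> prime s \<and> [s = a] (mod int q)}"
        unfolding Bk_def E_def by (auto simp: algebra_simps)
      also have "real (card \<dots>) * bnd j \<le> K * bnd j" using cnt bnn by (intro mult_right_mono) auto
      finally show ?thesis .
    qed
    have step4: "(\<Sum>j<n. bnd j) \<le> 3 / sqrt (real n)"
    proof -
      obtain m where m: "n = Suc m" using n2 by (cases n) auto
      define hh where "hh j = ((\<Sum>t\<in>Bk j. f t) + (\<Sum>t\<in>Dk j. f t)) / real y" for j
      have hnn: "hh j \<ge> 0" for j unfolding hh_def using fnn ypos by (auto intro!: add_nonneg_nonneg sum_nonneg divide_nonneg_pos)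
      have "(\<Sum>j<n. bnd j) = bnd 0 + (\<Sum>j<m. bnd (Suc j))" unfolding m by (rule sum.lessThan_Suc_shift)
      also have "(\<Sum>j<m. bnd (Suc j)) = (\<Sum>j<m. hh j)" unfolding bnd_def hh_def by simp
      also have "\<dots> \<le> (\<Sum>j<n. hh j)" using hnn m by (intro sum_mono2) auto
      also have "\<dots> = ((\<Sum>j<n. \<Sum>t\<in>Bk j. f t) + (\<Sum>j<n. \<Sum>t\<in>Dk j. f t)) / real y"
        unfolding hh_def sum_divide_distrib[symmetric] sum.distrib ..
      also have "(\<Sum>j<n. \<Sum>t\<in>Bk j. f t) = (\<Sum>t\<in>{0<..int n * Y}. f t)"
        unfolding Bk_def using block_sum_gt[of Y f n] Y0 by simp
      also have "(\<Sum>j<n. \<Sum>t\<in>Dk j. f t) = (\<Sum>t\<in>{0..<int n * Y}. f t)"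
        unfolding Dk_def using block_sum_ge[of Y f n] Y0 by simp
      also have "((\<Sum>t\<in>{0<..int n * Y}. f t) + (\<Sum>t\<in>{0..<int n * Y}. f t)) / real y \<le> 2 / real y"
        using pmf_sum_le1[of "{0<..int n * Y}" "srw n"] pmf_sum_le1[of "{0..<int n * Y}" "srw n"] ypos
        unfolding f_def by (intro divide_right_mono) auto
      also have "2 / real y \<le> 2 / sqrt (real n)" using y1 sq1 ypos by (intro divide_left_mono) auto
      also have "bnd 0 = 1 / sqrt (real n)" unfolding bnd_def by simp
      finally show ?thesis by simp
    qed
    have "measure_pmf.prob (srw n) {s. prime s \<and> [s = a] (mod int q)} \<le> (\<Sum>j<n. \<Sum>t\<in>Bk j. g t)"
      using step1 step2 unfolding E_def by simp
    also have "\<dots> \<le> (\<Sum>j<n. K * bnd j)" using step3 by (intro sum_mono) auto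
    also have "\<dots> = K * (\<Sum>j<n. bnd j)" by (simp add: sum_distrib_left)
    also have "\<dots> \<le> K * (3 / sqrt (real n))" using step4 Kpos by (intro mult_left_mono) auto
    also have "\<dots> = 3 * C1 * (real y / sqrt (real n)) / (real (totient q) * ln (real n))"
      unfolding K_def by (simp add: field_simps)
    also have "\<dots> \<le> 3 * C1 * 2 / (real (totient q) * ln (real n))"
    proof -
      have "real y / sqrt (real n) \<le> 2" using y2 sq1 by (simp add: field_simps)
      then show ?thesis using C1pos tq lnn by (intro divide_right_mono mult_left_mono) auto
    qed
    also have "\<dots> = 6 * C1 * (1 / real (totient q)) * (1 / ln (real n))" by simp
    finally show "measure_pmf.prob (srw n) {s. prime s \<and> [s = a] (mod int q)}
             \<le> 6 * C1 * (1 / real (totient q)) * (1 / ln (real n))" .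
  qed
qed

end
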